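(* Consider the disclosure model described in the context. Let $d_F$ be a full-disclosure policy. Then $\Gamma(d_F)\ge\Gamma(d)$ for every Pareto efficient disclosure policy $d\in\mathcal{D}$. That is, full disclosure induces the highest expected emission among all efficient disclosure policies.
   Context: Emissions lie in $E=[0,\bar e]$ with $\bar e>0$. The firm's type $\theta\in\Theta=[\underline\theta,\bar\theta]$ is private information with a continuous density $f=F'$ on $\Theta$. The firm's profit is $\tilde\pi(\theta,e,\tilde e)$ with actual emission $e$ and market-perceived emission $\tilde e$; it is strictly increasing in $e$ and strictly decreasing in $\tilde e$. Standing assumptions: $\tilde\pi$ is continuous on $\Theta\times E\times E$ and $C^2$ on its interior; $\pi(\theta,e):=\tilde\pi(\theta,e,e)$ is strictly concave in $e$; and $\pi(\theta,0)<\pi(\theta,\bar e)$ for all $\theta$. A disclosure policy is a function $d:E\to E$ (a partition of $E$ into level sets). An emission $e$ is belief-compatible under $d$ if $e\ge e'$ whenever $d(e')=d(e)$; $\tilde E_d$ is the set of such levels. The type-$\theta$ firm chooses $e\in\tilde E_d$ maximizing $\pi(\theta,e)$. $\mathcal{D}$ is the set of policies for which the maximum is attained for every type. For $d\in\mathcal{D}$, $\pi_d(\theta)=\max_{e\in\tilde E_d}\pi(\theta,e)$, and $\gamma_d(\theta)$ is the lowest maximizer. Further, $\Pi(d)=\int_\Theta\pi_d\,dF$ and $\Gamma(d)=\int_\Theta\gamma_d\,dF$. A policy $d\in\mathcal{D}$ is Pareto efficient if there is no $d'\in\mathcal{D}$ with $\Pi(d')\ge\Pi(d)$ and $\Gamma(d')\le\Gamma(d)$,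 at least one strict. Let $\hat{\mathbf e}(\theta):=\arg\max_{e\in E}\pi(\theta,e)$. A full-disclosure policy is a policy $d$ such that, for every $e\in\hat{\mathbf e}(\Theta)$, $e$ is alone in its cell: $d(e')=d(e)$ implies $e'=e$. Such a policy belongs to $\mathcal{D}$. *)

theory Defs
  imports "HOL-Analysis.Analysis"
begin

text \<open>Model of disclosure. Parameters: emission cap ebar, type bounds tlo thi,
  density f on [tlo, thi], profit pit theta e e_perceived.\<close>

definition C2_on :: "'a::real_normed_vector set \<Rightarrow> ('a \<Rightarrow> real) \<Rightarrow> bool" where
  "C2_on S g \<longleftrightarrow> (\<exists>(D :: 'a \<Rightarrow> 'a \<Rightarrow>\<^sub>L real) (D2 :: 'a \<Rightarrow> 'a \<Rightarrow>\<^sub>L ('a \<Rightarrow>\<^sub>L real)).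
      (\<forall>x\<in>S. (g has_derivative blinfun_apply (D x)) (at x)) \<and>
      (\<forall>x\<in>S. (D has_derivative blinfun_apply (D2 x)) (at x)) \<and>
      continuous_on S D2)"

definition Eset :: "real \<Rightarrow> real set" where
  "Eset ebar = {0..ebar}"

definition pi_diag :: "(real \<Rightarrow> real \<Rightarrow> real \<Rightarrow> real) \<Rightarrow> real \<Rightarrow> real \<Rightarrow> real" where
  "pi_diag pit \<theta> e = pit \<theta> e e"

definition model_assms ::
  "real \<Rightarrow> real \<Rightarrow> real \<Rightarrow> (real \<Rightarrow> real) \<Rightarrow> (real \<Rightarrow> real \<Rightarrow> real \<Rightarrow> real) \<Rightarrow> bool" where
  "model_assms ebar tlo thi f pit \<longleftrightarrow>
     ebar > 0 \<and> tlo < thi \<and>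
     continuous_on {tlo..thi} f \<and> (\<forall>\<theta>\<in>{tlo..thi}. f \<theta> \<ge> 0) \<and>
     (f has_integral 1) {tlo..thi} \<and>
     continuous_on ({tlo..thi} \<times> Eset ebar \<times> Eset ebar) (\<lambda>(\<theta>, e, e'). pit \<theta> e e') \<and>
     C2_on ({tlo<..<thi} \<times> {0<..<ebar} \<times> {0<..<ebar}) (\<lambda>(\<theta>, e, e'). pit \<theta> e e') \<and>
     (\<forall>\<theta>\<in>{tlo..thi}. \<forall>e'\<in>Eset ebar. \<forall>e1\<in>Eset ebar. \<forall>e2\<in>Eset ebar.
        e1 < e2 \<longrightarrow> pit \<theta> e1 e' < pit \<theta> e2 e') \<and>
     (\<forall>\<theta>\<in>{tlo..thi}. \<forall>e\<in>Eset ebar. \<forall>e1\<in>Eset ebar. \<forall>e2\<in>Eset ebar.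
        e1 < e2 \<longrightarrow> pit \<theta> e e2 < pit \<theta> e e1) \<and>
     (\<forall>\<theta>\<in>{tlo..thi}. \<forall>x\<in>Eset ebar. \<forall>y\<in>Eset ebar. x \<noteq> y \<longrightarrow>
        (\<forall>u::real. 0 < u \<and> u < 1 \<longrightarrow>
           pi_diag pit \<theta> ((1 - u) * x + u * y) > (1 - u) * pi_diag pit \<theta> x + u * pi_diag pit \<theta> y)) \<and>
     (\<forall>\<theta>\<in>{tlo..thi}. pi_diag pit \<theta> 0 < pi_diag pit \<theta> ebar)"

definition is_policy :: "real \<Rightarrow> (real \<Rightarrow> real) \<Rightarrow> bool" where
  "is_policy ebar d \<longleftrightarrow> d ` Eset ebar \<subseteq> Eset ebar"

definition Etilde :: "real \<Rightarrow> (real \<Rightarrow> real) \<Rightarrow> real set" where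
  "Etilde ebar d = {e \<in> Eset ebar. \<forall>e'\<in>Eset ebar. d e' = d e \<longrightarrow> e' \<le> e}"

definition Dset :: "real \<Rightarrow> real \<Rightarrow> real \<Rightarrow> (real \<Rightarrow> real \<Rightarrow> real \<Rightarrow> real) \<Rightarrow> (real \<Rightarrow> real) set" where
  "Dset ebar tlo thi pit = {d. is_policy ebar d \<and>
     (\<forall>\<theta>\<in>{tlo..thi}. \<exists>e\<in>Etilde ebar d. \<forall>e'\<in>Etilde ebar d. pi_diag pit \<theta> e' \<le> pi_diag pit \<theta> e)}"

definition pi_d :: "real \<Rightarrow> (real \<Rightarrow> real \<Rightarrow> real \<Rightarrow> real) \<Rightarrow> (real \<Rightarrow> real) \<Rightarrow> real \<Rightarrow> real" where
  "pi_d ebar pit d \<theta> = (SUP e\<in>Etilde ebar d. pi_diag pit \<theta> e)"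

definition gamma_d :: "real \<Rightarrow> (real \<Rightarrow> real \<Rightarrow> real \<Rightarrow> real) \<Rightarrow> (real \<Rightarrow> real) \<Rightarrow> real \<Rightarrow> real" where
  "gamma_d ebar pit d \<theta> = Inf {e \<in> Etilde ebar d. pi_diag pit \<theta> e = pi_d ebar pit d \<theta>}"

definition Pi_exp :: "real \<Rightarrow> real \<Rightarrow> real \<Rightarrow> (real \<Rightarrow> real) \<Rightarrow> (real \<Rightarrow> real \<Rightarrow> real \<Rightarrow> real) \<Rightarrow> (real \<Rightarrow> real) \<Rightarrow> real" where
  "Pi_exp ebar tlo thi f pit d = integral {tlo..thi} (\<lambda>\<theta>. pi_d ebar pit d \<theta> * f \<theta>)"

definition Gamma_exp :: "real \<Rightarrow> real \<Rightarrow> real \<Rightarrow> (real \<Rightarrow> real) \<Rightarrow> (real \<Rightarrow> real \<Rightarrow> real \<Rightarrow> real) \<Rightarrow> (real \<Rightarrow> real) \<Rightarrow> real" where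
  "Gamma_exp ebar tlo thi f pit d = integral {tlo..thi} (\<lambda>\<theta>. gamma_d ebar pit d \<theta> * f \<theta>)"

definition pareto_efficient ::
  "real \<Rightarrow> real \<Rightarrow> real \<Rightarrow> (real \<Rightarrow> real) \<Rightarrow> (real \<Rightarrow> real \<Rightarrow> real \<Rightarrow> real) \<Rightarrow> (real \<Rightarrow> real) \<Rightarrow> bool" where
  "pareto_efficient ebar tlo thi f pit d \<longleftrightarrow> d \<in> Dset ebar tlo thi pit \<and>
     \<not> (\<exists>d'\<in>Dset ebar tlo thi pit.
          Pi_exp ebar tlo thi f pit d' \<ge> Pi_exp ebar tlo thi f pit d \<and>
          Gamma_exp ebar tlo thi f pit d' \<le> Gamma_exp ebar tlo thi f pit d \<and>
          (Pi_exp ebar tlo thi f pit d' > Pi_exp ebar tlo thi f pit d \<or>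
           Gamma_exp ebar tlo thi f pit d' < Gamma_exp ebar tlo thi f pit d))"

definition ehat_image :: "real \<Rightarrow> real \<Rightarrow> real \<Rightarrow> (real \<Rightarrow> real \<Rightarrow> real \<Rightarrow> real) \<Rightarrow> real set" where
  "ehat_image ebar tlo thi pit = {e \<in> Eset ebar. \<exists>\<theta>\<in>{tlo..thi}.
      \<forall>e'\<in>Eset ebar. pi_diag pit \<theta> e' \<le> pi_diag pit \<theta> e}"

definition full_disclosure ::
  "real \<Rightarrow> real \<Rightarrow> real \<Rightarrow> (real \<Rightarrow> real \<Rightarrow> real \<Rightarrow> real) \<Rightarrow> (real \<Rightarrow> real) \<Rightarrow> bool" where
  "full_disclosure ebar tlo thi pit d \<longleftrightarrow> is_policy ebar d \<and>
     (\<forall>e\<in>ehat_image ebar tlo thi pit. \<forall>e'\<in>Eset ebar. d e' = d e \<longrightarrow> e' = e)"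

end

theory Submission
  imports Defs
begin

lemma sup_cont:
  fixes g :: "real \<Rightarrow> real \<Rightarrow> real"
  assumes cg: "continuous_on (T \<times> E) (\<lambda>(t,e). g t e)" and cT: "compact T" and cE: "compact E"
    and SE: "S \<subseteq> E" and Sne: "S \<noteq> {}"
  shows "continuous_on T (\<lambda>t. SUP e\<in>S. g t e)"
proof -
  have uc: "uniformly_continuous_on (T \<times> E) (\<lambda>(t,e). g t e)"
    using compact_uniformly_continuous[OF cg compact_Times[OF cT cE]] .
  have "bounded ((\<lambda>(t,e). g t e) ` (T \<times> E))"
    using compact_continuous_image[OF cg compact_Times[OF cT cE]] compact_imp_bounded by blast
  then obtain a where a: "\<forall>x\<in>(\<lambda>(t,e). g t e) ` (T \<times> E). \<bar>x\<bar> \<le> a"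
    unfolding bounded_real by blast
  have B: "g t e \<le> a" if "t \<in> T" "e \<in> E" for t e
  proof -
    have "\<bar>g t e\<bar> \<le> a"
      using a[rule_format, OF imageI[of "(t,e)" "T \<times> E" "\<lambda>(t,e). g t e"]] that by simp
    then show ?thesis by simp
  qed
  have bdd: "bdd_above (g t ` S)" if "t \<in> T" for t
    using B that SE by (auto intro!: bdd_aboveI[where M=a])
  have key: "(SUP e\<in>S. g x' e) \<le> (SUP e\<in>S. g x e) + r"
    if H: "\<forall>e\<in>S. g x' e < g x e + r" "x \<in> T" for x x' r
  proof (rule cSUP_least[OF Sne])
    fix e assume "e \<in> S"
    then have "g x' e < g x e + r" using H by blast
    also have "g x e \<le> (SUP e\<in>S. g x e)" using cSUP_upper[OF \<open>e \<in> S\<close> bdd[OF H(2)]] .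
    finally show "g x' e \<le> (SUP e\<in>S. g x e) + r" by simp
  qed
  have "uniformly_continuous_on T (\<lambda>t. SUP e\<in>S. g t e)"
    unfolding uniformly_continuous_on_def
  proof (intro allI impI)
    fix \<epsilon> :: real assume "\<epsilon> > 0"
    then have "\<epsilon>/2 > 0" by simp
    then obtain \<delta> where d: "\<delta> > 0" and dd: "\<forall>x\<in>T \<times> E. \<forall>x'\<in>T \<times> E. dist x' x < \<delta> \<longrightarrow>
        dist ((\<lambda>(t,e). g t e) x') ((\<lambda>(t,e). g t e) x) < \<epsilon>/2"
      using uc[unfolded uniformly_continuous_on_def, rule_format, OF \<open>\<epsilon>/2 > 0\<close>] by blast
    show "\<exists>d>0. \<forall>x\<in>T. \<forall>x'\<in>T. dist x' x < d \<longrightarrow>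
        dist (SUP e\<in>S. g x' e) (SUP e\<in>S. g x e) < \<epsilon>"
    proof (intro exI[of _ \<delta>] conjI ballI impI d)
      fix x x' assume xT: "x \<in> T" "x' \<in> T" and dx: "dist x' x < \<delta>"
      have cl: "\<bar>g x' e - g x e\<bar> < \<epsilon>/2" if "e \<in> S" for e
      proof -
        have "dist (x', e) (x, e) = dist x' x" by (simp add: dist_Pair_Pair)
        moreover have "(x', e) \<in> T \<times> E" "(x, e) \<in> T \<times> E" using xT that SE by auto
        ultimately have "dist ((\<lambda>(t,e). g t e) (x', e)) ((\<lambda>(t,e). g t e) (x, e)) < \<epsilon>/2"
          using dd dx by simp
        then have "dist (g x' e) (g x e) < \<epsilon>/2" by simp
        then show ?thesis by (simp add: dist_real_def)
      qed
      have cl2: "g x' e < g x e + \<epsilon>/2" "g x e < g x' e + \<epsilon>/2" if "e \<in> S" for e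
        using cl[OF that] by arith+
      have cl1: "\<forall>e\<in>S. g x' e < g x e + \<epsilon>/2" "\<forall>e\<in>S. g x e < g x' e + \<epsilon>/2"
        using cl2 by blast+
      have "(SUP e\<in>S. g x' e) \<le> (SUP e\<in>S. g x e) + \<epsilon>/2"
        by (intro key xT cl1)
      moreover have "(SUP e\<in>S. g x e) \<le> (SUP e\<in>S. g x' e) + \<epsilon>/2"
        by (intro key xT cl1)
      ultimately show "dist (SUP e\<in>S. g x' e) (SUP e\<in>S. g x e) < \<epsilon>"
        using \<open>\<epsilon> > 0\<close> by (simp add: dist_real_def abs_le_iff)
    qed
  qed
  then show ?thesis by (rule uniformly_continuous_imp_continuous)
qed

theorem proposition5:
  fixes ebar tlo thi :: real and f :: "real \<Rightarrow> real"
    and pit :: "real \<Rightarrow> real \<Rightarrow> real \<Rightarrow> real" and dF d :: "real \<Rightarrow> real"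
  assumes "model_assms ebar tlo thi f pit"
    and "full_disclosure ebar tlo thi pit dF"
    and "pareto_efficient ebar tlo thi f pit d"
  shows "Gamma_exp ebar tlo thi f pit dF \<ge> Gamma_exp ebar tlo thi f pit d"
proof (rule ccontr)
  assume neg: "\<not> ?thesis"
  define T where "T = {tlo..thi}"
  define E where "E = Eset ebar"
  define g where "g = pi_diag pit"
  have ma1: "ebar > 0"
    using assms(1) unfolding model_assms_def T_def[symmetric] E_def[symmetric]
    by (elim conjE) assumption
  have ma2: "tlo < thi"
    using assms(1) unfolding model_assms_def T_def[symmetric] E_def[symmetric]
    by (elim conjE) assumption
  have ma3: "continuous_on T f"
    using assms(1) unfolding model_assms_def T_def[symmetric] E_def[symmetric]
    by (elim conjE) assumption
  have ma4: "\<forall>\<theta>\<in>T. f \<theta> \<ge> 0"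
    using assms(1) unfolding model_assms_def T_def[symmetric] E_def[symmetric]
    by (elim conjE) assumption
  have ma5: "continuous_on (T \<times> E \<times> E) (\<lambda>(\<theta>, e, e'). pit \<theta> e e')"
    using assms(1) unfolding model_assms_def T_def[symmetric] E_def[symmetric]
    by (elim conjE) assumption
  note ma = ma1 ma2 ma3 ma4 ma5
  have Eeq: "E = {0..ebar}" unfolding E_def Eset_def by simp
  have cT: "compact T" and cE: "compact E" and Ene: "E \<noteq> {}" and Tne: "T \<noteq> {}"
    using ma(1,2) by (auto simp: T_def Eeq)
  have feq: "(\<lambda>(t,e). g t e) = (\<lambda>(\<theta>, e, e'). pit \<theta> e e') \<circ> (\<lambda>(t,e). (t,e,e))"
    by (auto simp: g_def pi_diag_def fun_eq_iff)
  have cg: "continuous_on (T \<times> E) (\<lambda>(t,e). g t e)"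
    unfolding feq
  proof (rule continuous_on_compose)
    show "continuous_on (T \<times> E) (\<lambda>(t, e). (t, e, e))"
      by (auto intro!: continuous_intros simp: case_prod_unfold)
    have "(\<lambda>(t, e). (t, e, e)) ` (T \<times> E) \<subseteq> T \<times> E \<times> E" by auto
    then show "continuous_on ((\<lambda>(t, e). (t, e, e)) ` (T \<times> E)) (\<lambda>(\<theta>, e, e'). pit \<theta> e e')"
      by (rule continuous_on_subset[OF ma(5)])
  qed
  have cgt: "continuous_on E (g t)" if "t \<in> T" for t
  proof -
    have "continuous_on E ((\<lambda>(t,e). g t e) \<circ> (\<lambda>e. (t,e)))"
    proof (rule continuous_on_compose)
      show "continuous_on E (\<lambda>e. (t, e))" by (intro continuous_intros)
      have "(\<lambda>e. (t, e)) ` E \<subseteq> T \<times> E" using that by auto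
      then show "continuous_on ((\<lambda>e. (t, e)) ` E) (\<lambda>(t, e). g t e)"
        by (rule continuous_on_subset[OF cg])
    qed
    then show ?thesis by (simp add: o_def)
  qed
  have maxex: "\<exists>eh\<in>E. \<forall>e'\<in>E. g t e' \<le> g t eh" if "t \<in> T" for t
    using continuous_attains_sup[OF cE Ene cgt[OF that]] by blast
  have bddg: "\<exists>B. \<forall>t\<in>T. \<forall>e\<in>E. g t e \<le> B"
  proof -
    have "bounded ((\<lambda>(t,e). g t e) ` (T \<times> E))"
      using compact_continuous_image[OF cg compact_Times[OF cT cE]] compact_imp_bounded by blast
    then obtain a where a: "\<forall>x\<in>(\<lambda>(t,e). g t e) ` (T \<times> E). \<bar>x\<bar> \<le> a"
      unfolding bounded_real by blast
    have "g t e \<le> a" if "t \<in> T" "e \<in> E" for t e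
    proof -
      have "\<bar>g t e\<bar> \<le> a"
      using a[rule_format, OF imageI[of "(t,e)" "T \<times> E" "\<lambda>(t,e). g t e"]] that by simp
      then show ?thesis by simp
    qed
    then show ?thesis by blast
  qed
  have EtE: "Etilde ebar dd \<subseteq> E" for dd unfolding Etilde_def E_def by auto
  have fd: "is_policy ebar dF" "\<forall>e\<in>ehat_image ebar tlo thi pit. \<forall>e'\<in>E. dF e' = dF e \<longrightarrow> e' = e"
    using assms(2) unfolding full_disclosure_def E_def by auto
  have ehat_in: "eh \<in> Etilde ebar dF" if "t \<in> T" "eh \<in> E" "\<forall>e'\<in>E. g t e' \<le> g t eh" for t eh
  proof -
    have "eh \<in> ehat_image ebar tlo thi pit"
      using that unfolding ehat_image_def T_def E_def g_def by auto
    then show ?thesis using fd(2) that(2) unfolding Etilde_def E_def by fastforce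
  qed
  have dFD: "dF \<in> Dset ebar tlo thi pit"
    unfolding Dset_def
  proof (intro CollectI conjI ballI fd(1))
    fix t assume "t \<in> {tlo..thi}"
    then have tT: "t \<in> T" by (simp add: T_def)
    then obtain eh where "eh \<in> E" "\<forall>e'\<in>E. g t e' \<le> g t eh" using maxex by blast
    then show "\<exists>e\<in>Etilde ebar dF. \<forall>e'\<in>Etilde ebar dF. pi_diag pit t e' \<le> pi_diag pit t e"
      using ehat_in[OF tT] EtE[of dF] by (auto simp: g_def)
  qed
  have pe: "d \<in> Dset ebar tlo thi pit"
    and nd: "\<not> (\<exists>d'\<in>Dset ebar tlo thi pit.
          Pi_exp ebar tlo thi f pit d' \<ge> Pi_exp ebar tlo thi f pit d \<and>
          Gamma_exp ebar tlo thi f pit d' \<le> Gamma_exp ebar tlo thi f pit d \<and>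
          (Pi_exp ebar tlo thi f pit d' > Pi_exp ebar tlo thi f pit d \<or>
           Gamma_exp ebar tlo thi f pit d' < Gamma_exp ebar tlo thi f pit d))"
    using assms(3) unfolding pareto_efficient_def by auto
  have nonempty: "Etilde ebar dd \<noteq> {}" if "dd \<in> Dset ebar tlo thi pit" for dd
    using that Tne unfolding Dset_def T_def by auto
  have cont_pi: "continuous_on T (pi_d ebar pit dd)" if "dd \<in> Dset ebar tlo thi pit" for dd
  proof -
    have "continuous_on T (\<lambda>t. SUP e\<in>Etilde ebar dd. g t e)"
      by (rule sup_cont[OF cg cT cE EtE nonempty[OF that]])
    then show ?thesis by (simp add: pi_d_def g_def)
  qed
  have int: "(\<lambda>t. pi_d ebar pit dd t * f t) integrable_on T" if "dd \<in> Dset ebar tlo thi pit" for dd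
    unfolding T_def
    by (rule integrable_continuous_interval)
       (use cont_pi[OF that] ma(3) in \<open>auto intro!: continuous_intros simp: T_def\<close>)
  obtain B where B: "\<forall>t\<in>T. \<forall>e\<in>E. g t e \<le> B" using bddg by blast
  have le: "pi_d ebar pit d t \<le> pi_d ebar pit dF t" if tT: "t \<in> T" for t
  proof -
    obtain eh where eh: "eh \<in> E" "\<forall>e'\<in>E. g t e' \<le> g t eh" using maxex[OF tT] by blast
    have "pi_d ebar pit d t \<le> g t eh"
      unfolding pi_d_def g_def[symmetric]
      by (rule cSUP_least[OF nonempty[OF pe]]) (use eh EtE in auto)
    also have "g t eh \<le> pi_d ebar pit dF t"
      unfolding pi_d_def g_def[symmetric]
      by (rule cSUP_upper[OF ehat_in[OF tT eh]]) (use B tT EtE in \<open>auto intro!: bdd_aboveI[where M=B]\<close>)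
    finally show ?thesis .
  qed
  have "Pi_exp ebar tlo thi f pit d \<le> Pi_exp ebar tlo thi f pit dF"
    unfolding Pi_exp_def T_def[symmetric]
    by (rule integral_le[OF int[OF pe] int[OF dFD]])
       (use le ma(4) in \<open>auto simp: T_def intro!: mult_right_mono\<close>)
  then show False using nd dFD neg by auto
qed

end
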